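(* Let $(\mathcal{X},\rho,\nu)$ be a bounded length space with a doubling metric $\rho$ and finite Borel measure $\nu$. Let $\eta\in\mathcal{F}_0$, and let $\mathbb{X}=(X_n)_{n\ge0}$ be a $\sigma$-smoothed process with respect to $\nu$ for some $\sigma>0$. Suppose the boundary $\partial_\eta\mathcal{X}$ has box-counting dimension $\mathfrak{b}>1$ and Minkowski content $\mathfrak{m}$. Then for any $c_1,c_2,p>0$ there exist constants $C_0,C_1>0$ such that, for any nearest neighbor process $(\tilde X_n)_{n\ge1}$, with probability at least $1-p$ the following holds simultaneously for all $N\in\mathbb{N}$: \[\sum_{n=1}^N\mathbb{1}\{\eta(X_n)\ne\eta(\tilde X_n)\}\le C_0+C_1\left(\frac{(\mathfrak{m}+c_2)N}{\sigma}\right)^{(\mathfrak{b}+c_1)/(\mathfrak{b}+1)}.\]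
   Context: A metric space is a length space if $\rho(x,x')=\inf_\gamma\ell(\gamma)$ over continuous paths $\gamma:[0,1]\to\mathcal{X}$ from $x$ to $x'$, with $\ell(\gamma)$ the length of $\gamma$. A metric is doubling if for some $d$ every open ball $B(x,r)$ can be covered by $2^d$ balls of radius $r/2$. $\mathrm{margin}_\eta(x)=\inf\{\rho(x,x'):\eta(x')\ne\eta(x)\}$, $\partial_\eta\mathcal{X}=\{x:\mathrm{margin}_\eta(x)=0\}$, and $\mathcal{F}_0$ is the set of measurable $\eta$ with $\nu(\partial_\eta\mathcal{X})=0$. $\mathbb{X}$ is $\sigma$-smoothed if $\Pr(X_n\in A\mid X_0,\dots,X_{n-1})\le\sigma^{-1}\nu(A)$ for all $n$ and all measurable $A$. A nearest neighbor process is any $(\tilde X_n)_{n\ge1}$ with $\tilde X_n\in\arg\min_{x\in\{X_0,\dots,X_{n-1}\}}\rho(X_n,x)$. For $A\subset\mathcal{X}$, $\mathcal{N}_r(A)$ is the minimal number of open balls of radius $r$ covering $A$; the (upper) box-counting dimension is $\mathfrak{b}(A)=\limsup_{r\to0}\frac{\log\mathcal{N}_r(A)}{\log(1/r)}$. The $r$-expansion is $A^r=\bigcup_{x\in A}B(x,r)$, and the (upper) Minkowski content is $\mathfrak{m}(A)=\limsup_{r\to0}\frac{\nu(A^r)-\nu(A)}{r}$. *)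

theory Defs
  imports "HOL-Analysis.Analysis" "HOL-Probability.Probability"
begin

definition path_len :: "(real \<Rightarrow> 'a::metric_space) \<Rightarrow> ereal" where
  "path_len \<gamma> = (SUP tn \<in> {(t, n). t 0 = 0 \<and> t n = 1 \<and> (\<forall>i<n. t i \<le> t (Suc i))}.
       ereal (\<Sum>i<snd tn. dist (\<gamma> (fst tn i)) (\<gamma> (fst tn (Suc i)))))"

definition length_space :: "'a::metric_space itself \<Rightarrow> bool" where
  "length_space _ \<longleftrightarrow> (\<forall>x x'::'a. ereal (dist x x') =
      (INF \<gamma> \<in> {\<gamma>. continuous_on {0..1} \<gamma> \<and> \<gamma> 0 = x \<and> \<gamma> 1 = x'}. path_len \<gamma>))"

definition doubling_metric :: "'a::metric_space itself \<Rightarrow> bool" where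
  "doubling_metric _ \<longleftrightarrow> (\<exists>d::nat. \<forall>(x::'a) r. \<exists>C. finite C \<and> card C \<le> 2 ^ d \<and>
      ball x r \<subseteq> (\<Union>c\<in>C. ball c (r / 2)))"

text \<open>margin with the convention inf of the empty set = +infinity\<close>
definition margin :: "('a::metric_space \<Rightarrow> 'b) \<Rightarrow> 'a \<Rightarrow> ereal" where
  "margin \<eta> x = (INF x' \<in> {x'. \<eta> x' \<noteq> \<eta> x}. ereal (dist x x'))"

definition boundary :: "('a::metric_space \<Rightarrow> 'b) \<Rightarrow> 'a set" where
  "boundary \<eta> = {x. margin \<eta> x = 0}"

definition F0 :: "'a::metric_space measure \<Rightarrow> ('a \<Rightarrow> 'b) set" where
  "F0 \<nu> = {\<eta>. \<eta> \<in> measurable \<nu> (count_space UNIV) \<and> boundary \<eta> \<in> null_sets \<nu>}"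

definition past_algebra :: "'w measure \<Rightarrow> (nat \<Rightarrow> 'w \<Rightarrow> 'a::metric_space) \<Rightarrow> nat \<Rightarrow> 'w measure" where
  "past_algebra M X n = sigma (space M) {X i -` B \<inter> space M | i B. i < n \<and> B \<in> sets borel}"

definition smoothed :: "'w measure \<Rightarrow> 'a::metric_space measure \<Rightarrow> real \<Rightarrow> (nat \<Rightarrow> 'w \<Rightarrow> 'a) \<Rightarrow> bool" where
  "smoothed M \<nu> \<sigma> X \<longleftrightarrow> (\<forall>n. \<forall>A \<in> sets \<nu>.
      AE \<omega> in M. real_cond_exp M (past_algebra M X n) (\<lambda>\<omega>. indicator A (X n \<omega>)) \<omega>
                  \<le> measure \<nu> A / \<sigma>)"

definition nn_process :: "(nat \<Rightarrow> 'w \<Rightarrow> 'a::metric_space) \<Rightarrow> (nat \<Rightarrow> 'w \<Rightarrow> 'a) \<Rightarrow> bool" where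
  "nn_process X Xt \<longleftrightarrow> (\<forall>n\<ge>1. \<forall>\<omega>. Xt n \<omega> \<in> (\<lambda>i. X i \<omega>) ` {..<n} \<and>
      (\<forall>i<n. dist (X n \<omega>) (Xt n \<omega>) \<le> dist (X n \<omega>) (X i \<omega>)))"

definition covering_number :: "real \<Rightarrow> 'a::metric_space set \<Rightarrow> nat" where
  "covering_number r A = Inf {card C | C. finite C \<and> A \<subseteq> (\<Union>c\<in>C. ball c r)}"

definition box_dim :: "'a::metric_space set \<Rightarrow> ereal" where
  "box_dim A = Limsup (at_right 0) (\<lambda>r. ereal (ln (real (covering_number r A)) / ln (1 / r)))"

definition expansion :: "'a::metric_space set \<Rightarrow> real \<Rightarrow> 'a set" where
  "expansion A r = (\<Union>x\<in>A. ball x r)"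

definition minkowski_content :: "'a::metric_space measure \<Rightarrow> 'a set \<Rightarrow> ereal" where
  "minkowski_content \<nu> A = Limsup (at_right 0)
      (\<lambda>r. ereal ((measure \<nu> (expansion A r) - measure \<nu> A) / r))"

end

theory Submission
  imports Defs
begin

lemma doubling_iter:
  fixes d :: nat and x :: "'a::metric_space"
  assumes dbl: "\<And>(x::'a) r. \<exists>C. finite C \<and> card C \<le> 2 ^ d \<and> ball x r \<subseteq> (\<Union>c\<in>C. ball c (r / 2))"
  shows "\<exists>C. finite C \<and> card C \<le> 2 ^ (d * k) \<and> ball x R \<subseteq> (\<Union>c\<in>C. ball c (R / 2 ^ k))"
proof (induction k)
  case 0
  then show ?case by (intro exI[of _ "{x}"]) auto
next
  case (Suc k)
  then obtain C where C: "finite C" "card C \<le> 2 ^ (d * k)" "ball x R \<subseteq> (\<Union>c\<in>C. ball c (R / 2 ^ k))" by blast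
  define D where "D c = (SOME D. finite D \<and> card D \<le> 2 ^ d \<and> ball c (R / 2 ^ k) \<subseteq> (\<Union>e\<in>D. ball e (R / 2 ^ k / 2)))" for c :: 'a
  have D: "finite (D c) \<and> card (D c) \<le> 2 ^ d \<and> ball c (R / 2 ^ k) \<subseteq> (\<Union>e\<in>D c. ball e (R / 2 ^ k / 2))" for c :: 'a
    unfolding D_def by (rule someI_ex) (rule dbl)
  have D1: "finite (D c)" and D2: "card (D c) \<le> 2 ^ d" and D3: "ball c (R / 2 ^ k) \<subseteq> (\<Union>e\<in>D c. ball e (R / 2 ^ k / 2))" for c
    using D[of c] by auto
  have fin: "finite (\<Union>c\<in>C. D c)" using C(1) D1 by simp
  have "card (\<Union>c\<in>C. D c) \<le> (\<Sum>c\<in>C. card (D c))" by (rule card_UN_le[OF C(1)])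
  also have "\<dots> \<le> (\<Sum>c\<in>C. 2 ^ d)" using D2 by (intro sum_mono) auto
  also have "\<dots> = card C * 2 ^ d" by simp
  also have "\<dots> \<le> 2 ^ (d * k) * 2 ^ d" using C(2) by simp
  also have "\<dots> = 2 ^ (d * Suc k)" by (simp add: power_add mult_Suc_right)
  finally have cd: "card (\<Union>c\<in>C. D c) \<le> 2 ^ (d * Suc k)" .
  have "ball x R \<subseteq> (\<Union>e\<in>(\<Union>c\<in>C. D c). ball e (R / 2 ^ Suc k))"
  proof
    fix y assume "y \<in> ball x R"
    then obtain c where c: "c \<in> C" "y \<in> ball c (R / 2 ^ k)" using C(3) by blast
    have "y \<in> (\<Union>e\<in>D c. ball e (R / 2 ^ k / 2))" using D3[of c] c(2) by (rule subsetD)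
    then obtain e where e: "e \<in> D c" "y \<in> ball e (R / 2 ^ k / 2)" by blast
    have "R / 2 ^ k / 2 = R / 2 ^ Suc k" by simp
    then show "y \<in> (\<Union>e\<in>(\<Union>c\<in>C. D c). ball e (R / 2 ^ Suc k))" using c e by (auto simp: mult.commute)
  qed
  then show ?case using fin cd by blast
qed

lemma separated_card_le:
  fixes f :: "'i \<Rightarrow> 'a::metric_space"
  assumes fin: "finite C" and t: "t > 0"
    and sep: "\<And>i j. i \<in> I \<Longrightarrow> j \<in> I \<Longrightarrow> i \<noteq> j \<Longrightarrow> dist (f i) (f j) \<ge> t"
    and cov: "\<And>i. i \<in> I \<Longrightarrow> f i \<in> (\<Union>c\<in>C. ball c (t / 2))"
  shows "card I \<le> card C"
proof -
  define g where "g i = (SOME c. c \<in> C \<and> f i \<in> ball c (t/2))" for i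
  have g: "g i \<in> C \<and> f i \<in> ball (g i) (t/2)" if "i \<in> I" for i
    unfolding g_def by (rule someI_ex) (use cov[OF that] in auto)
  have "inj_on g I"
  proof
    fix i j assume ij: "i \<in> I" "j \<in> I" "g i = g j"
    show "i = j"
    proof (rule ccontr)
      assume "i \<noteq> j"
      then have "dist (f i) (f j) \<ge> t" using sep ij by auto
      moreover have "dist (f i) (f j) < t"
      proof -
        have "dist (g i) (f i) < t/2" "dist (g i) (f j) < t/2" using g[OF ij(1)] g[OF ij(2)] ij(3) by auto
        then show ?thesis using dist_triangle_half_r[of "g i" "f i" t "f j"] by simp
      qed
      ultimately show False by simp
    qed
  qed
  moreover have "g ` I \<subseteq> C" using g by auto
  ultimately show ?thesis using card_inj_on_le[of g I C] fin by auto
qed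

lemma cover_exists:
  fixes d :: nat and x0 :: "'a::metric_space"
  assumes dbl: "\<And>(x::'a) r. \<exists>C. finite C \<and> card C \<le> 2 ^ d \<and> ball x r \<subseteq> (\<Union>c\<in>C. ball c (r / 2))"
    and R: "UNIV \<subseteq> ball x0 R" and t: "t > 0"
  shows "\<exists>C. finite C \<and> (UNIV::'a set) \<subseteq> (\<Union>c\<in>C. ball c t)"
proof -
  have "x0 \<in> ball x0 R" using R by (rule subsetD) simp
  then have "R > 0" by simp
  obtain k :: nat where k: "R / t < 2 ^ k" using real_arch_pow[of 2 "R / t"] by auto
  have "R < t * 2 ^ k" using k t by (simp add: field_simps)
  then have Rk: "R / 2 ^ k \<le> t" by (simp add: field_simps)
  obtain C where C: "finite C" "ball x0 R \<subseteq> (\<Union>c\<in>C. ball c (R / 2 ^ k))"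
    using doubling_iter[OF dbl, where x=x0 and k=k and R=R] by blast
  have "(\<Union>c\<in>C. ball c (R / 2 ^ k)) \<subseteq> (\<Union>c\<in>C. ball c t)"
    using Rk by (intro UN_mono) auto
  then have "UNIV \<subseteq> (\<Union>c\<in>C. ball c t)" by (rule order.trans[OF R order.trans[OF C(2)]])
  then show ?thesis using C(1) by blast
qed

lemma covering_number_attained:
  fixes A :: "'a::metric_space set"
  assumes "\<exists>C. finite C \<and> A \<subseteq> (\<Union>c\<in>C. ball c t)"
  shows "\<exists>C. finite C \<and> A \<subseteq> (\<Union>c\<in>C. ball c t) \<and> card C = covering_number t A"
proof -
  let ?S = "{card C | C. finite C \<and> A \<subseteq> (\<Union>c\<in>C. ball c t)}"
  have "?S \<noteq> {}" using assms by blast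
  then have "Inf ?S \<in> ?S" by (rule Inf_nat_def1)
  then show ?thesis unfolding covering_number_def by auto
qed

lemma covering_number_le:
  fixes A :: "'a::metric_space set"
  assumes "finite C" "A \<subseteq> (\<Union>c\<in>C. ball c t)"
  shows "covering_number t A \<le> card C"
  unfolding covering_number_def using assms by (intro cInf_lower) auto

lemma packing_expansion:
  fixes f :: "'i \<Rightarrow> 'a::metric_space" and d :: nat and A :: "'a set"
  assumes dbl: "\<And>(x::'a) r. \<exists>C. finite C \<and> card C \<le> 2 ^ d \<and> ball x r \<subseteq> (\<Union>c\<in>C. ball c (r / 2))"
    and t: "t > 0"
    and cov: "\<exists>C. finite C \<and> A \<subseteq> (\<Union>c\<in>C. ball c t)"
    and sep: "\<And>i j. i \<in> I \<Longrightarrow> j \<in> I \<Longrightarrow> i \<noteq> j \<Longrightarrow> dist (f i) (f j) \<ge> t"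
    and inexp: "\<And>i. i \<in> I \<Longrightarrow> f i \<in> expansion A (2 * t)"
  shows "card I \<le> 2 ^ (d * 3) * covering_number t A"
proof -
  obtain C where C: "finite C" "A \<subseteq> (\<Union>c\<in>C. ball c t)" "card C = covering_number t A"
    using covering_number_attained[OF cov] by blast
  define D where "D c = (SOME D. finite D \<and> card D \<le> 2 ^ (d * 3) \<and> ball c (3 * t) \<subseteq> (\<Union>e\<in>D. ball e (3 * t / 2 ^ 3)))" for c :: 'a
  have D: "finite (D c) \<and> card (D c) \<le> 2 ^ (d * 3) \<and> ball c (3 * t) \<subseteq> (\<Union>e\<in>D c. ball e (3 * t / 2 ^ 3))" for c :: 'a
    unfolding D_def by (rule someI_ex) (rule doubling_iter[OF dbl])
  have D1: "finite (D c)" and D2: "card (D c) \<le> 2 ^ (d * 3)" and D3: "ball c (3 * t) \<subseteq> (\<Union>e\<in>D c. ball e (3 * t / 2 ^ 3))" for c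
    using D[of c] by auto
  have fin: "finite (\<Union>c\<in>C. D c)" using C(1) D1 by simp
  have "card (\<Union>c\<in>C. D c) \<le> (\<Sum>c\<in>C. card (D c))" by (rule card_UN_le[OF C(1)])
  also have "\<dots> \<le> (\<Sum>c\<in>C. 2 ^ (d * 3))" using D2 by (intro sum_mono) auto
  also have "\<dots> = 2 ^ (d * 3) * covering_number t A" using C(3) by simp
  finally have cd: "card (\<Union>c\<in>C. D c) \<le> 2 ^ (d * 3) * covering_number t A" .
  have "card I \<le> card (\<Union>c\<in>C. D c)"
  proof (rule separated_card_le[OF fin t sep])
    fix i assume i: "i \<in> I"
    obtain z where z: "z \<in> A" "f i \<in> ball z (2 * t)" using inexp[OF i] unfolding expansion_def by blast
    have "z \<in> (\<Union>c\<in>C. ball c t)" using C(2) z(1) by (rule subsetD)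
    then obtain c where c: "c \<in> C" "dist c z < t" by auto
    have "dist c (f i) \<le> dist c z + dist z (f i)" by (rule dist_triangle)
    also have "\<dots> < 3 * t" using c(2) z(2) by simp
    finally have "f i \<in> ball c (3 * t)" by simp
    then have "f i \<in> (\<Union>e\<in>D c. ball e (3 * t / 2 ^ 3))" using D3[of c] by (rule subsetD[rotated])
    then obtain e where e: "e \<in> D c" "dist e (f i) < 3 * t / 2 ^ 3" by auto
    have "3 * t / 2 ^ 3 \<le> t / 2" using t by simp
    then have "f i \<in> ball e (t / 2)" using e(2) by simp
    then show "f i \<in> (\<Union>e\<in>(\<Union>c\<in>C. D c). ball e (t / 2))" using c(1) e(1) by blast
  qed
  then show ?thesis using cd by simp
qed

lemma packing_global:
  fixes d :: nat and x0 :: "'a::metric_space"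
  assumes dbl: "\<And>(x::'a) r. \<exists>C. finite C \<and> card C \<le> 2 ^ d \<and> ball x r \<subseteq> (\<Union>c\<in>C. ball c (r / 2))"
    and R: "UNIV \<subseteq> ball x0 R" and t: "t > 0"
  shows "\<exists>K::nat. \<forall>(I::'i set) (f::'i \<Rightarrow> 'a). (\<forall>i\<in>I. \<forall>j\<in>I. i \<noteq> j \<longrightarrow> dist (f i) (f j) \<ge> t) \<longrightarrow> card I \<le> K"
proof -
  obtain C where C: "finite C" "(UNIV::'a set) \<subseteq> (\<Union>c\<in>C. ball c (t / 2))"
    using cover_exists[OF dbl R, of "t/2"] t by auto
  show ?thesis
  proof (intro exI allI impI)
    fix I :: "'i set" and f :: "'i \<Rightarrow> 'a"
    assume sep: "\<forall>i\<in>I. \<forall>j\<in>I. i \<noteq> j \<longrightarrow> dist (f i) (f j) \<ge> t"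
    show "card I \<le> card C"
    proof (rule separated_card_le[OF C(1) t])
      show "\<And>i j. i \<in> I \<Longrightarrow> j \<in> I \<Longrightarrow> i \<noteq> j \<Longrightarrow> t \<le> dist (f i) (f j)" using sep by blast
      fix i show "f i \<in> (\<Union>c\<in>C. ball c (t / 2))" using C(2) by (rule subsetD) simp
    qed
  qed
qed

lemma path_len_ge:
  fixes \<gamma> :: "real \<Rightarrow> 'a::metric_space"
  assumes s: "0 \<le> s" "s \<le> 1"
  shows "ereal (dist (\<gamma> 0) (\<gamma> s)) \<le> path_len \<gamma>"
proof -
  define t where "t i = (if i = 0 then 0 else if i = (1::nat) then s else (1::real))" for i
  have mem: "(t, 2) \<in> {(t, n). t 0 = 0 \<and> t n = 1 \<and> (\<forall>i<n. t i \<le> t (Suc i))}"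
  proof -
    have "\<forall>i<2. t i \<le> t (Suc i)"
    proof (intro allI impI)
      fix i :: nat assume "i < 2"
      then have "i = 0 \<or> i = 1" by auto
      then show "t i \<le> t (Suc i)" using s by (auto simp: t_def)
    qed
    then show ?thesis by (simp add: t_def)
  qed
  have "(\<Sum>i<snd (t, 2::nat). dist (\<gamma> (fst (t, 2::nat) i)) (\<gamma> (fst (t, 2::nat) (Suc i))))
        = dist (\<gamma> 0) (\<gamma> s) + dist (\<gamma> s) (\<gamma> 1)"
    by (simp add: t_def numeral_2_eq_2)
  then have "ereal (dist (\<gamma> 0) (\<gamma> s)) \<le> ereal (\<Sum>i<snd (t, 2::nat). dist (\<gamma> (fst (t, 2::nat) i)) (\<gamma> (fst (t, 2::nat) (Suc i))))"
    by simp
  also have "\<dots> \<le> path_len \<gamma>"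
    unfolding path_len_def by (rule SUP_upper[OF mem])
  finally show ?thesis .
qed

lemma near_boundary:
  fixes x y :: "'a::metric_space" and \<eta> :: "'a \<Rightarrow> 'b"
  assumes length: "length_space TYPE('a)" and neq: "\<eta> x \<noteq> \<eta> y" and \<delta>: "\<delta> > 0"
  shows "\<exists>z \<in> boundary \<eta>. dist x z < dist x y + \<delta>"
proof -
  let ?S = "{\<gamma>. continuous_on {0..1} \<gamma> \<and> \<gamma> 0 = x \<and> \<gamma> 1 = y}"
  have "ereal (dist x y) = (INF \<gamma> \<in> ?S. path_len \<gamma>)"
    using length unfolding length_space_def by blast
  moreover have "ereal (dist x y) < ereal (dist x y + \<delta>)" using \<delta> by simp
  ultimately have "(INF \<gamma> \<in> ?S. path_len \<gamma>) < ereal (dist x y + \<delta>)" by simp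
  then obtain \<gamma> where \<gamma>S: "\<gamma> \<in> ?S" and \<gamma>len: "path_len \<gamma> < ereal (dist x y + \<delta>)"
    unfolding INF_less_iff by blast
  have cont: "continuous_on {0..1} \<gamma>" and g0: "\<gamma> 0 = x" and g1: "\<gamma> 1 = y" using \<gamma>S by auto
  define T where "T = {t\<in>{0..1}. \<eta> (\<gamma> t) \<noteq> \<eta> x}"
  define ts where "ts = Inf T"
  have T1: "1 \<in> T" using g1 neq by (simp add: T_def)
  have Tne: "T \<noteq> {}" using T1 by blast
  have Tbdd: "bdd_below T" unfolding T_def by (rule bdd_belowI[of _ 0]) auto
  have ts_le: "ts \<le> t" if "t \<in> T" for t unfolding ts_def by (rule cInf_lower[OF that Tbdd])
  have ts0: "0 \<le> ts" unfolding ts_def by (rule cInf_greatest[OF Tne]) (auto simp: T_def)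
  have ts1: "ts \<le> 1" using ts_le[OF T1] .
  let ?z = "\<gamma> ts"
  have "ereal (dist x ?z) \<le> path_len \<gamma>" using path_len_ge[OF ts0 ts1, of \<gamma>] g0 by simp
  then have "ereal (dist x ?z) < ereal (dist x y + \<delta>)" using \<gamma>len by (rule le_less_trans)
  then have dz: "dist x ?z < dist x y + \<delta>" by simp
  have close: "\<exists>x'. \<eta> x' \<noteq> \<eta> ?z \<and> dist ?z x' < e" if e: "e > 0" for e
  proof -
    have "ts \<in> {0..1}" using ts0 ts1 by simp
    then obtain d where d: "d > 0" "\<And>t. t \<in> {0..1} \<Longrightarrow> dist t ts < d \<Longrightarrow> dist (\<gamma> t) (\<gamma> ts) < e"
      using cont e unfolding continuous_on_iff by metis
    show ?thesis
    proof (cases "\<eta> ?z = \<eta> x")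
      case True
      have "Inf T < ts + d" using d(1) by (simp add: ts_def)
      then obtain t where t: "t \<in> T" "t < ts + d" using cInf_lessD[OF Tne] by blast
      have "ts \<le> t" using ts_le[OF t(1)] .
      then have "dist t ts < d" using t(2) by (simp add: dist_real_def)
      moreover have t01: "t \<in> {0..1}" and "\<eta> (\<gamma> t) \<noteq> \<eta> x" using t(1) by (auto simp: T_def)
      ultimately show ?thesis using d(2)[OF t01] True by (intro exI[of _ "\<gamma> t"]) (auto simp: dist_commute)
    next
      case False
      then have "ts \<noteq> 0" using g0 by auto
      then have tsp: "ts > 0" using ts0 by simp
      define t where "t = max 0 (ts - d / 2)"
      have t01: "t \<in> {0..1}" using ts1 d(1) by (auto simp: t_def)
      have tlt: "t < ts" using tsp d(1) by (auto simp: t_def)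
      have "dist t ts < d" using tsp d(1) by (auto simp: t_def dist_real_def)
      have "\<eta> (\<gamma> t) = \<eta> x"
      proof (rule ccontr)
        assume "\<eta> (\<gamma> t) \<noteq> \<eta> x"
        then have "t \<in> T" using t01 by (simp add: T_def)
        then show False using ts_le tlt by force
      qed
      then show ?thesis using d(2)[OF t01 \<open>dist t ts < d\<close>] False
        by (intro exI[of _ "\<gamma> t"]) (auto simp: dist_commute)
    qed
  qed
  have "margin \<eta> ?z = 0"
  proof (rule antisym)
    show "0 \<le> margin \<eta> ?z" unfolding margin_def by (rule INF_greatest) simp
    show "margin \<eta> ?z \<le> 0"
    proof (rule ccontr)
      assume "\<not> margin \<eta> ?z \<le> 0"
      then have "0 < margin \<eta> ?z" by simp
      then obtain e where e: "0 < ereal e" "ereal e < margin \<eta> ?z" using ereal_dense2 by blast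
      then have "e > 0" by simp
      then obtain x' where x': "\<eta> x' \<noteq> \<eta> ?z" "dist ?z x' < e" using close by blast
      have "margin \<eta> ?z \<le> ereal (dist ?z x')" unfolding margin_def
        by (rule INF_lower) (use x'(1) in simp)
      also have "\<dots> < ereal e" using x'(2) by simp
      finally show False using e(2) by simp
    qed
  qed
  then have "?z \<in> boundary \<eta>" by (simp add: boundary_def)
  then show ?thesis using dz by blast
qed

lemma dyadic_bound:
  fixes Mf :: "real \<Rightarrow> real"
  assumes s0: "s0 > 0" and A: "A \<ge> 0" and \<beta>: "\<beta> > 0"
    and base: "\<And>t. t \<ge> s0 \<Longrightarrow> Mf t \<le> K0"
    and step: "\<And>t. 0 < t \<Longrightarrow> t < s0 \<Longrightarrow> Mf t \<le> Mf (2 * t) + A * t powr (-\<beta>)"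
    and t: "t > 0"
  shows "Mf t \<le> K0 + A * (2 powr \<beta> / (2 powr \<beta> - 1)) * t powr (-\<beta>)"
proof -
  define q where "q = (2::real) powr \<beta>"
  have q1: "q > 1" unfolding q_def using powr_less_mono[of 0 \<beta> 2] \<beta> by simp
  define A2 where "A2 = A * (q / (q - 1))"
  have A2: "A2 \<ge> 0" unfolding A2_def using A q1 by simp
  have A2eq: "A2 / q + A = A2" unfolding A2_def using q1 by (simp add: field_simps)
  have P: "\<forall>t. s0 / 2 ^ k \<le> t \<longrightarrow> Mf t \<le> K0 + A2 * t powr (-\<beta>)" for k :: nat
  proof (induction k)
    case 0
    show ?case
    proof (intro allI impI)
      fix t assume "s0 / 2 ^ 0 \<le> t"
      then have "t \<ge> s0" by simp
      then have "Mf t \<le> K0" by (rule base)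
      moreover have "A2 * t powr (-\<beta>) \<ge> 0" using A2 by simp
      ultimately show "Mf t \<le> K0 + A2 * t powr (-\<beta>)" by simp
    qed
  next
    case (Suc k)
    show ?case
    proof (intro allI impI)
      fix t assume tk: "s0 / 2 ^ Suc k \<le> t"
      have tpos: "t > 0" using tk s0 by (smt (verit) divide_pos_pos zero_less_power)
      show "Mf t \<le> K0 + A2 * t powr (-\<beta>)"
      proof (cases "s0 / 2 ^ k \<le> t")
        case True
        then show ?thesis using Suc.IH by blast
      next
        case False
        then have "t < s0 / 2 ^ k" by simp
        also have "\<dots> \<le> s0" using s0 by (simp add: field_simps)
        finally have ts0: "t < s0" .
        have "s0 / 2 ^ k \<le> 2 * t" using tk by (simp add: field_simps)
        then have IH2: "Mf (2 * t) \<le> K0 + A2 * (2 * t) powr (-\<beta>)" using Suc.IH by blast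
        have "(2 * t) powr (-\<beta>) = t powr (-\<beta>) / q"
          using tpos by (simp add: powr_mult powr_minus q_def divide_inverse)
        have "Mf t \<le> Mf (2 * t) + A * t powr (-\<beta>)" by (rule step[OF tpos ts0])
        also have "\<dots> \<le> K0 + A2 * (2 * t) powr (-\<beta>) + A * t powr (-\<beta>)" using IH2 by simp
        also have "\<dots> = K0 + (A2 / q + A) * t powr (-\<beta>)"
          using \<open>(2 * t) powr (-\<beta>) = t powr (-\<beta>) / q\<close> by (simp add: algebra_simps)
        also have "\<dots> = K0 + A2 * t powr (-\<beta>)" using A2eq by simp
        finally show ?thesis .
      qed
    qed
  qed
  obtain k :: nat where k: "s0 / t < 2 ^ k" using real_arch_pow[of 2 "s0 / t"] by auto
  then have "s0 / 2 ^ k \<le> t" using t by (simp add: field_simps)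
  then have "Mf t \<le> K0 + A2 * t powr (-\<beta>)" using P by blast
  then show ?thesis unfolding A2_def q_def .
qed

lemma sum_indicator_card:
  fixes N :: nat
  shows "(\<Sum>n=1..N. if P n then 1 else 0 :: real) = real (card {n\<in>{1..N}. P n})"
proof -
  have "(\<Sum>n\<in>{n\<in>{1..N}. P n}. 1 :: real) = (\<Sum>n=1..N. if P n then 1 else 0)"
    by (rule sum.inter_filter) simp
  then show ?thesis by simp
qed

lemma mistakes_bound:
  fixes x xt :: "nat \<Rightarrow> 'a::metric_space" and \<eta> :: "'a \<Rightarrow> 'b" and r :: "nat \<Rightarrow> real"
    and d :: nat and x0 :: 'a
  assumes length: "length_space TYPE('a)"
    and dbl: "\<And>(x::'a) r. \<exists>C. finite C \<and> card C \<le> 2 ^ d \<and> ball x r \<subseteq> (\<Union>c\<in>C. ball c (r / 2))"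
    and R: "UNIV \<subseteq> ball x0 R"
    and nn: "\<And>n. n \<ge> 1 \<Longrightarrow> xt n \<in> x ` {..<n} \<and> (\<forall>i<n. dist (x n) (xt n) \<le> dist (x n) (x i))"
    and s0: "s0 > 0"
    and K0: "\<forall>(I::nat set) (f::nat \<Rightarrow> 'a). (\<forall>i\<in>I. \<forall>j\<in>I. i \<noteq> j \<longrightarrow> dist (f i) (f j) \<ge> s0) \<longrightarrow> card I \<le> K0"
    and box: "\<And>t. 0 < t \<Longrightarrow> t < s0 \<Longrightarrow> real (covering_number t (boundary \<eta>)) \<le> t powr (-\<beta>)"
    and \<beta>: "\<beta> > 0"
    and rpos: "\<And>n. r n > 0" and rmono: "\<And>n m. n \<le> m \<Longrightarrow> r m \<le> r n"
  shows "(\<Sum>n=1..N. if \<eta> (x n) \<noteq> \<eta> (xt n) then 1 else 0 :: real)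
    \<le> real (card {n\<in>{1..N}. x n \<in> expansion (boundary \<eta>) (r n)}) + real K0
       + 2 ^ (d * 3) * (2 powr \<beta> / (2 powr \<beta> - 1)) * r N powr (-\<beta>)"
proof -
  define mis where "mis n \<longleftrightarrow> \<eta> (x n) \<noteq> \<eta> (xt n)" for n
  define \<rho> where "\<rho> n = dist (x n) (xt n)" for n
  define Mf where "Mf t = real (card {n\<in>{1..N}. mis n \<and> t \<le> \<rho> n})" for t
  define B where "B = boundary \<eta>"
  have near: "x n \<in> expansion B t" if m: "mis n" and lt: "\<rho> n < t" for n t
  proof -
    obtain z where z: "z \<in> B" "dist (x n) z < dist (x n) (xt n) + (t - \<rho> n)"
      using near_boundary[OF length, of \<eta> "x n" "xt n" "t - \<rho> n"] m[unfolded mis_def] lt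
      unfolding B_def by auto
    then have "x n \<in> ball z t" by (simp add: \<rho>_def dist_commute)
    then show ?thesis using z(1) unfolding expansion_def by blast
  qed
  have sep: "dist (x i) (x j) \<ge> \<rho> j" if "1 \<le> i" "i < j" for i j
    using nn[of j] that unfolding \<rho>_def by (simp add: dist_commute)
  have sep2: "dist (x i) (x j) \<ge> t" if "i \<in> {n\<in>{1..N}. mis n \<and> t \<le> \<rho> n}" "j \<in> {n\<in>{1..N}. mis n \<and> t \<le> \<rho> n}" "i \<noteq> j" for i j t
  proof (cases "i < j")
    case True
    then show ?thesis using sep[of i j] that by auto
  next
    case False
    then have "j < i" using that(3) by simp
    then show ?thesis using sep[of j i] that by (auto simp: dist_commute)
  qed
  have base: "Mf t \<le> real K0" if "t \<ge> s0" for t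
  proof -
    have "card {n\<in>{1..N}. mis n \<and> t \<le> \<rho> n} \<le> K0"
      using K0 sep2[of _ t] that by (meson order_trans)
    then show ?thesis unfolding Mf_def by simp
  qed
  have step: "Mf t \<le> Mf (2 * t) + 2 ^ (d * 3) * t powr (-\<beta>)" if t: "0 < t" "t < s0" for t
  proof -
    define U where "U = {n\<in>{1..N}. mis n \<and> t \<le> \<rho> n \<and> \<rho> n < 2 * t}"
    have split: "{n\<in>{1..N}. mis n \<and> t \<le> \<rho> n} \<subseteq> {n\<in>{1..N}. mis n \<and> 2 * t \<le> \<rho> n} \<union> U"
      unfolding U_def by auto
    have cardsplit: "card {n\<in>{1..N}. mis n \<and> t \<le> \<rho> n} \<le> card {n\<in>{1..N}. mis n \<and> 2 * t \<le> \<rho> n} + card U"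
      by (rule order.trans[OF card_mono[OF _ split] card_Un_le]) (simp add: U_def)
    obtain C where C: "finite C" "(UNIV::'a set) \<subseteq> (\<Union>c\<in>C. ball c t)"
      using cover_exists[OF dbl R t(1)] by blast
    have cov: "\<exists>C. finite C \<and> B \<subseteq> (\<Union>c\<in>C. ball c t)" using C by blast
    have "card U \<le> 2 ^ (d * 3) * covering_number t B"
    proof (rule packing_expansion[OF dbl t(1) cov])
      show "\<And>i j. i \<in> U \<Longrightarrow> j \<in> U \<Longrightarrow> i \<noteq> j \<Longrightarrow> t \<le> dist (x i) (x j)"
        using sep2 unfolding U_def by auto
      show "\<And>i. i \<in> U \<Longrightarrow> x i \<in> expansion B (2 * t)"
        using near unfolding U_def by auto
    qed
    then have "real (card U) \<le> 2 ^ (d * 3) * real (covering_number t B)"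
      by (metis of_nat_le_iff of_nat_mult of_nat_numeral of_nat_power)
    also have "\<dots> \<le> 2 ^ (d * 3) * t powr (-\<beta>)"
      using box[OF t] unfolding B_def by (intro mult_left_mono) auto
    finally have "real (card U) \<le> 2 ^ (d * 3) * t powr (-\<beta>)" .
    then show ?thesis using cardsplit unfolding Mf_def by linarith
  qed
  have Mbound: "Mf (r N) \<le> real K0 + 2 ^ (d * 3) * (2 powr \<beta> / (2 powr \<beta> - 1)) * r N powr (-\<beta>)"
    by (rule dyadic_bound[OF s0 _ \<beta> base step rpos]) auto
  have sub: "{n\<in>{1..N}. mis n} \<subseteq> {n\<in>{1..N}. x n \<in> expansion B (r n)} \<union> {n\<in>{1..N}. mis n \<and> r N \<le> \<rho> n}"
  proof
    fix n assume n: "n \<in> {n\<in>{1..N}. mis n}"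
    show "n \<in> {n\<in>{1..N}. x n \<in> expansion B (r n)} \<union> {n\<in>{1..N}. mis n \<and> r N \<le> \<rho> n}"
    proof (cases "\<rho> n < r n")
      case True
      then show ?thesis using near[of n "r n"] n by auto
    next
      case False
      then have "r N \<le> \<rho> n" using rmono[of n N] n by auto
      then show ?thesis using n by auto
    qed
  qed
  have "card {n\<in>{1..N}. mis n} \<le> card {n\<in>{1..N}. x n \<in> expansion B (r n)} + card {n\<in>{1..N}. mis n \<and> r N \<le> \<rho> n}"
    by (rule order.trans[OF card_mono[OF _ sub] card_Un_le]) simp
  then have "real (card {n\<in>{1..N}. mis n}) \<le> real (card {n\<in>{1..N}. x n \<in> expansion B (r n)}) + Mf (r N)"
    unfolding Mf_def by linarith
  then show ?thesis using Mbound unfolding sum_indicator_card mis_def B_def by linarith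
qed

lemma smooth_prob:
  fixes \<nu> :: "'a::metric_space measure" and M :: "'w measure" and X :: "nat \<Rightarrow> 'w \<Rightarrow> 'a"
  assumes prob: "prob_space M" and borel: "sets \<nu> = sets borel"
    and Xmeas: "\<And>n. X n \<in> measurable M \<nu>" and smooth: "smoothed M \<nu> \<sigma> X" and A: "A \<in> sets \<nu>"
  shows "measure M (X n -` A \<inter> space M) \<le> measure \<nu> A / \<sigma>"
proof -
  interpret prob_space M by (rule prob)
  define G where "G = {X i -` B \<inter> space M | i B. i < n \<and> B \<in> sets borel}"
  define F where "F = past_algebra M X n"
  have GP: "G \<subseteq> Pow (space M)" unfolding G_def by auto
  have GM: "G \<subseteq> sets M"
  proof
    fix S assume "S \<in> G"
    then obtain i B where S: "S = X i -` B \<inter> space M" "B \<in> sets borel" unfolding G_def by blast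
    have "B \<in> sets \<nu>" using S(2) borel by simp
    then show "S \<in> sets M" unfolding S(1) by (rule measurable_sets[OF Xmeas])
  qed
  have FG: "F = sigma (space M) G" unfolding F_def past_algebra_def G_def by simp
  have subalg: "subalgebra M F"
    unfolding subalgebra_def FG using GP GM sets.sigma_sets_subset[OF GM] by simp
  interpret finite_measure_subalgebra M F
    by unfold_locales (rule subalg)
  define S where "S = X n -` A \<inter> space M"
  have SM: "S \<in> sets M" unfolding S_def by (rule measurable_sets[OF Xmeas A])
  define f :: "'w \<Rightarrow> real" where "f \<omega> = indicator A (X n \<omega>)" for \<omega>
  have fmeas: "f \<in> borel_measurable M"
    unfolding f_def by (rule measurable_compose[OF Xmeas borel_measurable_indicator[OF A]])
  have fint: "integrable M f"
    by (rule integrable_const_bound[where B=1]) (auto simp: f_def fmeas)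
  have "(\<integral>\<omega>. f \<omega> \<partial>M) = (\<integral>\<omega>. indicator S \<omega> \<partial>M)"
    by (rule Bochner_Integration.integral_cong) (auto simp: f_def S_def indicator_def)
  also have "\<dots> = measure M S" using SM by (simp add: Int_absorb2 sets.sets_into_space)
  finally have intf: "(\<integral>\<omega>. f \<omega> \<partial>M) = measure M S" .
  have AEc: "AE \<omega> in M. real_cond_exp M F f \<omega> \<le> measure \<nu> A / \<sigma>"
    using smooth A unfolding smoothed_def F_def f_def by blast
  have "measure M S = (\<integral>\<omega>. real_cond_exp M F f \<omega> \<partial>M)"
    using real_cond_exp_int(2)[OF fint] intf by simp
  also have "\<dots> \<le> (\<integral>\<omega>. measure \<nu> A / \<sigma> \<partial>M)"
    by (rule integral_mono_AE[OF real_cond_exp_int(1)[OF fint] _ AEc]) simp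
  also have "\<dots> = measure \<nu> A / \<sigma>" by (simp add: prob_space)
  finally show ?thesis unfolding S_def .
qed

lemma markov_event:
  fixes M :: "'w measure" and g :: "nat \<Rightarrow> 'w \<Rightarrow> real" and a :: "nat \<Rightarrow> real"
  assumes prob: "prob_space M"
    and gmeas: "\<And>i. g i \<in> borel_measurable M"
    and gnn: "\<And>i \<omega>. g i \<omega> \<ge> 0"
    and gint: "\<And>i. (\<integral>\<^sup>+\<omega>. ennreal (g i \<omega>) \<partial>M) \<le> ennreal (a i)"
    and ann: "\<And>i. a i \<ge> 0" and asum: "summable a" and p: "p > 0"
  shows "\<exists>E \<in> sets M. measure M E \<ge> 1 - p \<and> (\<exists>K. \<forall>\<omega>\<in>E. \<forall>N. (\<Sum>i<N. g i \<omega>) \<le> K)"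
proof -
  interpret prob_space M by (rule prob)
  define W where "W \<omega> = (\<Sum>i. ennreal (g i \<omega>))" for \<omega>
  define Stot where "Stot = suminf a"
  have Stot0: "Stot \<ge> 0" unfolding Stot_def using ann asum by (simp add: suminf_nonneg)
  define K where "K = (Stot + 1) / p"
  have Kpos: "K > 0" unfolding K_def using Stot0 p by simp
  have Wmeas: "W \<in> borel_measurable M" unfolding W_def using gmeas by measurable
  have "(\<integral>\<^sup>+\<omega>. W \<omega> \<partial>M) = (\<Sum>i. \<integral>\<^sup>+\<omega>. ennreal (g i \<omega>) \<partial>M)"
    unfolding W_def by (rule nn_integral_suminf) (use gmeas in measurable)
  also have "\<dots> \<le> (\<Sum>i. ennreal (a i))" by (intro suminf_le gint) auto
  also have "\<dots> = ennreal Stot" unfolding Stot_def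
    by (rule suminf_ennreal_eq[OF ann]) (use asum in \<open>simp add: summable_sums\<close>)
  finally have intW: "(\<integral>\<^sup>+\<omega>. W \<omega> \<partial>M) \<le> ennreal Stot" .
  define S where "S = {\<omega>\<in>space M. ennreal K \<le> W \<omega>}"
  have SM: "S \<in> sets M" unfolding S_def using Wmeas by measurable
  have "ennreal K * emeasure M S = (\<integral>\<^sup>+\<omega>. ennreal K * indicator S \<omega> \<partial>M)"
    by (rule nn_integral_cmult_indicator[OF SM, symmetric])
  also have "\<dots> \<le> (\<integral>\<^sup>+\<omega>. W \<omega> \<partial>M)"
    by (rule nn_integral_mono) (auto simp: S_def indicator_def)
  also have "\<dots> \<le> ennreal Stot" by (rule intW)
  finally have "ennreal K * ennreal (measure M S) \<le> ennreal Stot" by (simp add: emeasure_eq_measure)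
  then have "ennreal (K * measure M S) \<le> ennreal Stot" by (simp add: ennreal_mult'')
  then have KS: "K * measure M S \<le> Stot" using Stot0 by simp
  have "measure M S \<le> p"
  proof -
    have "measure M S \<le> Stot / K" using KS Kpos by (simp add: field_simps)
    also have "\<dots> = p * (Stot / (Stot + 1))" unfolding K_def using p Stot0 by (simp add: field_simps)
    also have "\<dots> \<le> p * 1" using p Stot0 by (intro mult_left_mono) auto
    finally show ?thesis by simp
  qed
  define E where "E = space M - S"
  have EM: "E \<in> sets M" unfolding E_def using SM by auto
  have "measure M E = 1 - measure M S" unfolding E_def by (rule prob_compl[OF SM])
  then have Ep: "measure M E \<ge> 1 - p" using \<open>measure M S \<le> p\<close> by simp
  have bound: "(\<Sum>i<N. g i \<omega>) \<le> K" if "\<omega> \<in> E" for \<omega> N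
  proof -
    have WK: "W \<omega> < ennreal K" using that unfolding E_def S_def by auto
    have "ennreal (\<Sum>i<N. g i \<omega>) = (\<Sum>i<N. ennreal (g i \<omega>))" using gnn by simp
    also have "\<dots> \<le> W \<omega>" unfolding W_def by (rule sum_le_suminf) auto
    finally have "ennreal (\<Sum>i<N. g i \<omega>) < ennreal K" using WK by (rule le_less_trans)
    then show ?thesis using Kpos by (metis ennreal_less_iff less_eq_real_def order.strict_implies_order not_le ennreal_leI)
  qed
  show ?thesis using EM Ep bound by blast
qed

theorem theorem9:
  fixes \<nu> :: "'a::metric_space measure" and M :: "'w measure"
    and \<eta> :: "'a \<Rightarrow> 'b" and X :: "nat \<Rightarrow> 'w \<Rightarrow> 'a"
    and \<sigma> b m c1 c2 p :: real
  assumes bounded: "bounded (UNIV :: 'a set)"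
    and length: "length_space TYPE('a)"
    and doubling: "doubling_metric TYPE('a)"
    and borel: "sets \<nu> = sets borel"
    and finite: "finite_measure \<nu>"
    and eta: "\<eta> \<in> F0 \<nu>"
    and prob: "prob_space M"
    and Xmeas: "\<And>n. X n \<in> measurable M \<nu>"
    and sigma_pos: "\<sigma> > 0"
    and smooth: "smoothed M \<nu> \<sigma> X"
    and bdim: "box_dim (boundary \<eta>) = ereal b" and b_gt: "b > 1"
    and mink: "minkowski_content \<nu> (boundary \<eta>) = ereal m"
    and c_pos: "c1 > 0" "c2 > 0" "p > 0"
  shows "\<exists>C0 C1. C0 > 0 \<and> C1 > 0 \<and>
    (\<forall>Xt. nn_process X Xt \<longrightarrow>
      (\<exists>E \<in> sets M. measure M E \<ge> 1 - p \<and>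
        (\<forall>\<omega>\<in>E. \<forall>N::nat.
          (\<Sum>n=1..N. if \<eta> (X n \<omega>) \<noteq> \<eta> (Xt n \<omega>) then 1 else 0 :: real)
            \<le> C0 + C1 * ((m + c2) * real N / \<sigma>) powr ((b + c1) / (b + 1)))))"
proof -
  interpret P: prob_space M by (rule prob)
  interpret F: finite_measure \<nu> by (rule finite)
  obtain d :: nat where dbl: "\<And>(x::'a) r. \<exists>C. finite C \<and> card C \<le> 2 ^ d \<and> ball x r \<subseteq> (\<Union>c\<in>C. ball c (r / 2))"
    using doubling unfolding doubling_metric_def by blast
  obtain x0 :: 'a and R where R: "UNIV \<subseteq> ball x0 R"
    using bounded_subset_ballD[OF bounded] by blast
  define B where "B = boundary \<eta>"
  have Bnull: "B \<in> null_sets \<nu>" using eta unfolding F0_def B_def by auto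
  have Bsets: "B \<in> sets \<nu>" using Bnull by auto
  have B0: "measure \<nu> B = 0" using Bnull by (simp add: measure_def null_setsD1)
  have expsets: "expansion B t \<in> sets \<nu>" for t
  proof -
    have "open (expansion B t)" unfolding expansion_def by (intro open_UN) auto
    then show ?thesis using borel by simp
  qed
  have "minkowski_content \<nu> B < ereal (m + c2)" using mink c_pos unfolding B_def by simp
  then have "eventually (\<lambda>r. ereal ((measure \<nu> (expansion B r) - measure \<nu> B) / r) < ereal (m + c2)) (at_right 0)"
    unfolding minkowski_content_def by (rule Limsup_lessD)
  then obtain r0 :: real where r0: "r0 > 0"
    and r0b: "\<And>t. 0 < t \<Longrightarrow> t < r0 \<Longrightarrow> ereal ((measure \<nu> (expansion B t) - measure \<nu> B) / t) < ereal (m + c2)"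
    unfolding eventually_at_right_field by auto
  have mink_bd: "measure \<nu> (expansion B t) \<le> (m + c2) * t" if "0 < t" "t < r0" for t
  proof -
    have "measure \<nu> (expansion B t) / t < m + c2" using r0b[OF that] B0 by simp
    then show ?thesis using that(1) by (simp add: field_simps)
  qed
  have m0: "m \<ge> 0"
  proof -
    have "eventually (\<lambda>r. ereal 0 \<le> ereal ((measure \<nu> (expansion B r) - measure \<nu> B) / r)) (at_right 0)"
      unfolding eventually_at_right_field using B0 by (intro exI[of _ 1]) auto
    then have "ereal 0 \<le> minkowski_content \<nu> B"
      unfolding minkowski_content_def by (intro le_Limsup) auto
    then show ?thesis using mink unfolding B_def by simp
  qed
  define \<beta> where "\<beta> = b + c1 / 2"
  have \<beta>pos: "\<beta> > 0" unfolding \<beta>_def using b_gt c_pos by simp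
  have "box_dim B < ereal \<beta>" using bdim c_pos unfolding B_def \<beta>_def by simp
  then have "eventually (\<lambda>r. ereal (ln (real (covering_number r B)) / ln (1 / r)) < ereal \<beta>) (at_right 0)"
    unfolding box_dim_def by (rule Limsup_lessD)
  then obtain s1 :: real where s1: "s1 > 0"
    and s1b: "\<And>t. 0 < t \<Longrightarrow> t < s1 \<Longrightarrow> ln (real (covering_number t B)) / ln (1 / t) < \<beta>"
    unfolding eventually_at_right_field by auto
  define s0 where "s0 = min s1 (1/2)"
  have s0pos: "s0 > 0" unfolding s0_def using s1 by simp
  have box: "real (covering_number t B) \<le> t powr (-\<beta>)" if t: "0 < t" "t < s0" for t
  proof -
    have t1: "t < 1" "t < s1" using t unfolding s0_def by auto
    have lnpos: "ln (1 / t) > 0" using t t1 by simp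
    have "ln (real (covering_number t B)) < \<beta> * ln (1 / t)"
      using s1b[OF t(1) t1(2)] lnpos by (simp add: field_simps)
    moreover have "t powr (-\<beta>) = exp (\<beta> * ln (1 / t))"
      using t by (simp add: powr_def ln_div)
    ultimately show ?thesis
    proof (cases "covering_number t B = 0")
      case False
      then have "real (covering_number t B) = exp (ln (real (covering_number t B)))" by simp
      also have "\<dots> < exp (\<beta> * ln (1 / t))" using \<open>ln (real (covering_number t B)) < \<beta> * ln (1 / t)\<close> by simp
      finally show ?thesis using \<open>t powr (-\<beta>) = exp (\<beta> * ln (1 / t))\<close> by simp
    qed simp
  qed
  define K0 :: nat where "K0 = (SOME K::nat. \<forall>(I::nat set) (f::nat \<Rightarrow> 'a). (\<forall>i\<in>I. \<forall>j\<in>I. i \<noteq> j \<longrightarrow> dist (f i) (f j) \<ge> s0) \<longrightarrow> card I \<le> K)"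
  have K0: "\<forall>(I::nat set) (f::nat \<Rightarrow> 'a). (\<forall>i\<in>I. \<forall>j\<in>I. i \<noteq> j \<longrightarrow> dist (f i) (f j) \<ge> s0) \<longrightarrow> card I \<le> K0"
    unfolding K0_def by (rule someI_ex) (rule packing_global[OF dbl R s0pos])
  define \<gamma> where "\<gamma> = (b + c1) / (b + 1)"
  define \<alpha> where "\<alpha> = \<gamma> / \<beta>"
  have \<gamma>pos: "\<gamma> > 0" unfolding \<gamma>_def using b_gt c_pos by simp
  have \<alpha>pos: "\<alpha> > 0" unfolding \<alpha>_def using \<gamma>pos \<beta>pos by simp
  have \<alpha>\<beta>: "\<alpha> * \<beta> = \<gamma>" unfolding \<alpha>_def using \<beta>pos by simp
  have \<gamma>\<alpha>: "\<gamma> + \<alpha> > 1"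
  proof -
    have b1: "b + 1 > 0" using b_gt by simp
    have "\<gamma> * (\<beta> + 1) - \<beta> = ((b + c1) * (\<beta> + 1) - \<beta> * (b + 1)) / (b + 1)"
      unfolding \<gamma>_def using b1 by (simp add: diff_divide_distrib)
    also have "(b + c1) * (\<beta> + 1) - \<beta> * (b + 1) = c1 * (2 * b + 1 + c1) / 2"
      unfolding \<beta>_def by (simp add: field_simps)
    finally have "\<gamma> * (\<beta> + 1) - \<beta> = c1 * (2 * b + 1 + c1) / 2 / (b + 1)" .
    moreover have "c1 * (2 * b + 1 + c1) / 2 / (b + 1) > 0" using c_pos b_gt by simp
    ultimately have "\<gamma> * (\<beta> + 1) > \<beta>" by simp
    then have "\<gamma> * \<beta> + \<gamma> > \<beta>" by (simp add: algebra_simps)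
    then have "(\<gamma> * \<beta> + \<gamma>) / \<beta> > 1" using \<beta>pos by simp
    moreover have "(\<gamma> * \<beta> + \<gamma>) / \<beta> = \<gamma> + \<alpha>" unfolding \<alpha>_def using \<beta>pos by (simp add: add_divide_distrib)
    ultimately show ?thesis by simp
  qed
  define \<rho>0 where "\<rho>0 = min s0 r0 / 2"
  have \<rho>0pos: "\<rho>0 > 0" and \<rho>0s: "\<rho>0 < s0" and \<rho>0r: "\<rho>0 < r0"
    unfolding \<rho>0_def using s0pos r0 by auto
  define r where "r n = \<rho>0 * real (max n 1) powr (-\<alpha>)" for n :: nat
  have rpos: "r n > 0" for n unfolding r_def using \<rho>0pos by simp
  have rmono: "r m' \<le> r n" if "n \<le> m'" for n m'
  proof -
    have "real (max m' 1) powr (-\<alpha>) \<le> real (max n 1) powr (-\<alpha>)"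
      using that \<alpha>pos by (intro powr_mono2') auto
    then show ?thesis unfolding r_def using \<rho>0pos by simp
  qed
  have rle: "r n \<le> \<rho>0" for n
  proof -
    have "1 \<le> real (max n 1) powr \<alpha>" using \<alpha>pos by (intro ge_one_powr_ge_zero) auto
    then have "real (max n 1) powr (-\<alpha>) \<le> 1" by (simp add: powr_minus field_simps)
    then show ?thesis unfolding r_def using \<rho>0pos by (simp add: mult_left_le)
  qed
  define L where "L = (m + c2) / \<sigma>"
  have Lpos: "L > 0" unfolding L_def using m0 c_pos sigma_pos by simp
  define g where "g i \<omega> = indicator (expansion B (r (Suc i))) (X (Suc i) \<omega>) * real (Suc i) powr (-\<gamma>)" for i \<omega>
  define a where "a i = (L * \<rho>0) * real (Suc i) powr (-(\<gamma> + \<alpha>))" for i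
  have gmeas: "g i \<in> borel_measurable M" for i
  proof -
    have "(\<lambda>\<omega>. indicator (expansion B (r (Suc i))) (X (Suc i) \<omega>) :: real) \<in> borel_measurable M"
      by (rule measurable_compose[OF Xmeas borel_measurable_indicator[OF expsets]])
    then show ?thesis unfolding g_def by measurable
  qed
  have gnn: "g i \<omega> \<ge> 0" for i \<omega> unfolding g_def by simp
  have gint: "(\<integral>\<^sup>+\<omega>. ennreal (g i \<omega>) \<partial>M) \<le> ennreal (a i)" for i
  proof -
    define S where "S = X (Suc i) -` expansion B (r (Suc i)) \<inter> space M"
    define w where "w = real (Suc i) powr (-\<gamma>)"
    have w0: "w \<ge> 0" unfolding w_def by simp
    have SM: "S \<in> sets M" unfolding S_def by (rule measurable_sets[OF Xmeas expsets])
    have "(\<integral>\<^sup>+\<omega>. ennreal (g i \<omega>) \<partial>M) = (\<integral>\<^sup>+\<omega>. ennreal w * indicator S \<omega> \<partial>M)"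
      by (rule nn_integral_cong) (auto simp: g_def S_def w_def indicator_def)
    also have "\<dots> = ennreal w * emeasure M S" by (rule nn_integral_cmult_indicator[OF SM])
    also have "\<dots> = ennreal (w * measure M S)" using w0 by (simp add: P.emeasure_eq_measure ennreal_mult)
    also have "\<dots> \<le> ennreal (a i)"
    proof (rule ennreal_leI)
      have "measure M S \<le> measure \<nu> (expansion B (r (Suc i))) / \<sigma>"
        unfolding S_def by (rule smooth_prob[OF prob borel Xmeas smooth expsets])
      also have "\<dots> \<le> (m + c2) * r (Suc i) / \<sigma>"
        using mink_bd[OF rpos] rle[of "Suc i"] \<rho>0r sigma_pos by (intro divide_right_mono) auto
      finally have "w * measure M S \<le> w * ((m + c2) * r (Suc i) / \<sigma>)" using w0 by (rule mult_left_mono)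
      also have "\<dots> = a i"
      proof -
        have "real (Suc i) powr (-\<gamma>) * real (Suc i) powr (-\<alpha>) = real (Suc i) powr (-(\<gamma> + \<alpha>))"
          by (simp add: powr_add[symmetric])
        then show ?thesis unfolding w_def a_def r_def L_def by (simp add: field_simps)
      qed
      finally show "w * measure M S \<le> a i" .
    qed
    finally show ?thesis .
  qed
  have ann: "a i \<ge> 0" for i unfolding a_def using Lpos \<rho>0pos by simp
  have asum: "summable a"
  proof -
    have "summable (\<lambda>n. real n powr (-(\<gamma> + \<alpha>)))" using \<gamma>\<alpha> by (simp add: summable_real_powr_iff)
    then have "summable (\<lambda>n. real (Suc n) powr (-(\<gamma> + \<alpha>)))" by (subst summable_Suc_iff)
    then show ?thesis unfolding a_def by (rule summable_mult)
  qed
  define E where "E = (SOME E. E \<in> sets M \<and> measure M E \<ge> 1 - p \<and> (\<exists>K. \<forall>\<omega>\<in>E. \<forall>N. (\<Sum>i<N. g i \<omega>) \<le> K))"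
  have Eprop: "E \<in> sets M \<and> measure M E \<ge> 1 - p \<and> (\<exists>K. \<forall>\<omega>\<in>E. \<forall>N. (\<Sum>i<N. g i \<omega>) \<le> K)"
    unfolding E_def by (rule someI_ex) (rule markov_event[OF prob gmeas gnn gint ann asum c_pos(3), unfolded Bex_def])
  have EM: "E \<in> sets M" and Ep: "measure M E \<ge> 1 - p" and EK0: "\<exists>K. \<forall>\<omega>\<in>E. \<forall>N. (\<Sum>i<N. g i \<omega>) \<le> K"
    using Eprop by simp_all
  define K where "K = (SOME K. \<forall>\<omega>\<in>E. \<forall>N. (\<Sum>i<N. g i \<omega>) \<le> K)"
  have EK1: "\<forall>\<omega>\<in>E. \<forall>N. (\<Sum>i<N. g i \<omega>) \<le> K" unfolding K_def by (rule someI_ex) (rule EK0)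
  have EK: "(\<Sum>i<N. g i \<omega>) \<le> K" if "\<omega> \<in> E" for \<omega> N using EK1 that by simp
  define A where "A = 2 ^ (d * 3) * (2 powr \<beta> / (2 powr \<beta> - 1))"
  have A0: "A \<ge> 0"
  proof -
    have "2 powr \<beta> > 1" using powr_less_mono[of 0 \<beta> 2] \<beta>pos by simp
    then show ?thesis unfolding A_def by simp
  qed
  define Kp where "Kp = max K 0"
  define C0 where "C0 = real K0 + 1"
  define C1 where "C1 = (Kp + A * \<rho>0 powr (-\<beta>)) / L powr \<gamma> + 1"
  have C0pos: "C0 > 0" unfolding C0_def by simp
  have C1pos: "C1 > 0"
  proof -
    have "Kp + A * \<rho>0 powr (-\<beta>) \<ge> 0" unfolding Kp_def using A0 by simp
    moreover have "L powr \<gamma> > 0" using Lpos by simp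
    ultimately have "(Kp + A * \<rho>0 powr (-\<beta>)) / L powr \<gamma> \<ge> 0" by simp
    then show ?thesis unfolding C1_def by linarith
  qed
  have main: "(\<Sum>n=1..N. if \<eta> (X n \<omega>) \<noteq> \<eta> (Xt n \<omega>) then 1 else 0 :: real)
            \<le> C0 + C1 * ((m + c2) * real N / \<sigma>) powr \<gamma>"
    if nn: "nn_process X Xt" and \<omega>: "\<omega> \<in> E" for Xt \<omega> N
  proof (cases "N = 0")
    case True
    then show ?thesis using C0pos \<gamma>pos by simp
  next
    case False
    then have N1: "N \<ge> 1" by simp
    have nnx: "\<And>n. n \<ge> 1 \<Longrightarrow> Xt n \<omega> \<in> (\<lambda>i. X i \<omega>) ` {..<n} \<and> (\<forall>i<n. dist (X n \<omega>) (Xt n \<omega>) \<le> dist (X n \<omega>) (X i \<omega>))"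
      using nn unfolding nn_process_def by blast
    have mb: "(\<Sum>n=1..N. if \<eta> (X n \<omega>) \<noteq> \<eta> (Xt n \<omega>) then 1 else 0 :: real)
      \<le> real (card {n\<in>{1..N}. X n \<omega> \<in> expansion B (r n)}) + real K0 + A * r N powr (-\<beta>)"
      unfolding B_def A_def
      by (rule mistakes_bound[OF length dbl R nnx s0pos K0 box[unfolded B_def] \<beta>pos rpos rmono])
    define Pn where "Pn n \<longleftrightarrow> X n \<omega> \<in> expansion B (r n)" for n
    have NN: "real N powr \<gamma> \<ge> 0" by simp
    have "real (card {n\<in>{1..N}. X n \<omega> \<in> expansion B (r n)}) = (\<Sum>n=1..N. if Pn n then 1 else 0 :: real)"
      unfolding Pn_def by (rule sum_indicator_card[symmetric])
    also have "\<dots> \<le> (\<Sum>n=1..N. (if Pn n then 1 else 0) * (real N powr \<gamma> * real n powr (-\<gamma>)))"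
    proof (rule sum_mono)
      fix n assume n: "n \<in> {1..N}"
      have "real n powr \<gamma> \<le> real N powr \<gamma>" using n \<gamma>pos by (intro powr_mono2) auto
      moreover have "real n powr \<gamma> > 0" using n by simp
      ultimately have "1 \<le> real N powr \<gamma> * real n powr (-\<gamma>)" by (simp add: powr_minus field_simps)
      then show "(if Pn n then 1 else 0) \<le> (if Pn n then 1 else 0) * (real N powr \<gamma> * real n powr (-\<gamma>))"
        by simp
    qed
    also have "\<dots> = real N powr \<gamma> * (\<Sum>n=1..N. (if Pn n then 1 else 0) * real n powr (-\<gamma>))"
      by (simp add: sum_distrib_left algebra_simps)
    also have "(\<Sum>n=1..N. (if Pn n then 1 else 0) * real n powr (-\<gamma>)) = (\<Sum>i<N. g i \<omega>)"
    proof -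
      define h where "h n = (if Pn n then 1 else 0) * real n powr (-\<gamma>)" for n
      have "(\<Sum>n=1..N. h n) = (\<Sum>i<N. h (Suc i))" using sum.atLeast1_atMost_eq[of h N] by simp
      moreover have "h (Suc i) = g i \<omega>" for i unfolding h_def g_def Pn_def by (simp add: indicator_def)
      ultimately show ?thesis unfolding h_def by simp
    qed
    also have "real N powr \<gamma> * (\<Sum>i<N. g i \<omega>) \<le> real N powr \<gamma> * Kp"
      using EK[OF \<omega>, of N] NN unfolding Kp_def by (intro mult_left_mono) auto
    finally have cardb: "real (card {n\<in>{1..N}. X n \<omega> \<in> expansion B (r n)}) \<le> real N powr \<gamma> * Kp" .
    have rN: "r N powr (-\<beta>) = \<rho>0 powr (-\<beta>) * real N powr \<gamma>"
    proof -
      have "r N = \<rho>0 * real N powr (-\<alpha>)" unfolding r_def using N1 by (simp add: max_def)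
      then have "r N powr (-\<beta>) = \<rho>0 powr (-\<beta>) * (real N powr (-\<alpha>)) powr (-\<beta>)" by (simp add: powr_mult)
      also have "(real N powr (-\<alpha>)) powr (-\<beta>) = real N powr \<gamma>" using \<alpha>\<beta> by (simp add: powr_powr)
      finally show ?thesis .
    qed
    have RHS: "((m + c2) * real N / \<sigma>) powr \<gamma> = L powr \<gamma> * real N powr \<gamma>"
    proof -
      have "(m + c2) * real N / \<sigma> = L * real N" unfolding L_def by simp
      then show ?thesis by (simp add: powr_mult)
    qed
    have LG: "L powr \<gamma> > 0" using Lpos by simp
    have "C1 * (L powr \<gamma> * real N powr \<gamma>) = (Kp + A * \<rho>0 powr (-\<beta>)) * real N powr \<gamma> + L powr \<gamma> * real N powr \<gamma>"
      unfolding C1_def using LG by (simp add: field_simps)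
    also have "\<dots> \<ge> (Kp + A * \<rho>0 powr (-\<beta>)) * real N powr \<gamma>" using LG NN by simp
    finally have C1b: "C1 * (L powr \<gamma> * real N powr \<gamma>) \<ge> Kp * real N powr \<gamma> + A * (\<rho>0 powr (-\<beta>) * real N powr \<gamma>)"
      by (simp add: algebra_simps)
    show ?thesis using mb cardb rN RHS C1b unfolding C0_def by (simp add: algebra_simps)
  qed
  show ?thesis
  proof (rule exI[of _ C0], rule exI[of _ C1], intro conjI allI impI)
    show "C0 > 0" by (rule C0pos)
    show "C1 > 0" by (rule C1pos)
    fix Xt assume nn: "nn_process X Xt"
    show "\<exists>E \<in> sets M. measure M E \<ge> 1 - p \<and>
        (\<forall>\<omega>\<in>E. \<forall>N::nat.
          (\<Sum>n=1..N. if \<eta> (X n \<omega>) \<noteq> \<eta> (Xt n \<omega>) then 1 else 0 :: real)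
            \<le> C0 + C1 * ((m + c2) * real N / \<sigma>) powr ((b + c1) / (b + 1)))"
    proof (rule bexI[OF _ EM], intro conjI ballI allI)
      show "measure M E \<ge> 1 - p" by (rule Ep)
      fix \<omega> N assume "\<omega> \<in> E"
      show "(\<Sum>n=1..N. if \<eta> (X n \<omega>) \<noteq> \<eta> (Xt n \<omega>) then 1 else 0 :: real)
            \<le> C0 + C1 * ((m + c2) * real N / \<sigma>) powr ((b + c1) / (b + 1))"
        using main[OF nn \<open>\<omega> \<in> E\<close>, of N] unfolding \<gamma>_def .
    qed
  qed
qed

end
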